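(* Let $d,n\ge 1$, let $\mathcal{B}=\{x\in\mathbb{R}^d : x_i\in[\underline{x}_i,\overline{x}_i],\ i=1,\dots,d\}$ be a box with $\underline{x}_i\le \overline{x}_i$, and let $f:\mathbb{R}^d\to\mathbb{R}$ and $f_1,\dots,f_n:\mathbb{R}^d\to\mathbb{R}$ satisfy the assumptions stated in the context (in particular $f$ is a continuous piece-wise function defined in terms of $f_1,\dots,f_n$, each $f_j$ is differentiable on $\mathbb{R}^d$ and analytic along every line, and $\gamma>0$ bounds the second directional derivatives of the $f_j$). Let $\{x_s\}_{s\ge 0}$ be any sequence of iterates generated by the iteration described in the context (the multidimensional algorithm, run without termination). Then every limit point of $\{x_s\}$ is a global minimizer of the problem $f^*:=\min_{x\in\mathcal{B}} f(x)$.
   Context: Assumptions. $f_1,\dots,f_n:\mathbb{R}^d\to\mathbb{R}$ are differentiable on $\mathbb{R}^d$, and each $f_j$ is analytic along every line in $\mathbb{R}^d$, i.e. for every $x\in\mathbb{R}^d$ and $p\in\mathbb{R}^d$ the function $\alpha\mapsto f_j(x+\alpha p)$ is real analytic on $\mathbb{R}$. The function $f:\mathbb{R}^d\to\mathbb{R}$ is continuous and piece-wise defined in terms of $f_1,\dots,f_n$: for every $x,y\in\mathbb{R}^d$, the segment $\{x+t(y-x): t\in[0,1]\}$ can be split into finitely many subintervals $[t_\ell,t_{\ell+1}]$ of $[0,1]$ on each of which $t\mapsto f(x+t(y-x))$ coincides with $t\mapsto f_j(x+t(y-x))$ for some index $j\in\{1,\dots,n\}$ (depending on the subinterval). The scalar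 $\gamma>0$ satisfies $\left|\frac{d^2}{d\alpha^2} f_j(x+\alpha p)\right|\le\gamma$ for all $j=1,\dots,n$, all $x\in\mathbb{R}^d$, all unit vectors $p\in\mathbb{R}^d$ ($\|p\|_2=1$), and all $\alpha\in\mathbb{R}$. Quadratic models. For a point $y\in\mathbb{R}^d$ define $q_y(x):=f(y)+\min_{j=1,\dots,n}\{\nabla f_j(y)^T(x-y)\}-\frac{\gamma}{2}\|x-y\|_2^2$. The iteration (multidimensional algorithm). Pick an arbitrary $x_0\in\mathcal{B}$. For $s=0,1,2,\dots$: set $q_s:=q_{x_s}$, $\overline{q}_s(x):=\max_{k=0,\dots,s} q_k(x)$, choose $x_{s+1}$ to be a global minimizer of $\overline{q}_s$ over $\mathcal{B}$, and set the lower bound $l_{s+1}:=\overline{q}_s(x_{s+1})$ and the upper bound $u_{s+1}:=\min_{k=0,\dots,s+1} f(x_k)$. (In the paper the loop stops once $u_s-l_s\le\epsilon$ for a tolerance $\epsilon>0$; the theorem concerns the infinite sequence $\{x_s\}$ produced when the iteration is continued indefinitely.) *)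

theory Defs
  imports "HOL-Analysis.Analysis"
begin

definition grad :: "('a::real_inner \<Rightarrow> real) \<Rightarrow> 'a \<Rightarrow> 'a" where
  "grad g y = (SOME D. GDERIV g y :> D)"

definition real_analytic :: "(real \<Rightarrow> real) \<Rightarrow> bool" where
  "real_analytic h \<longleftrightarrow>
     (\<forall>t0. \<exists>r>0. \<exists>c::nat \<Rightarrow> real. \<forall>t. \<bar>t - t0\<bar> < r \<longrightarrow>
        (\<lambda>k. c k * (t - t0) ^ k) sums h t)"

definition piecewise_on_segments ::
  "('a::real_vector \<Rightarrow> real) \<Rightarrow> (nat \<Rightarrow> 'a \<Rightarrow> real) \<Rightarrow> nat \<Rightarrow> bool" where
  "piecewise_on_segments f fs n \<longleftrightarrow>
     (\<forall>x y. \<exists>(m::nat) (ts::nat \<Rightarrow> real). ts 0 = 0 \<and> ts m = 1 \<and>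
        (\<forall>l<m. ts l < ts (Suc l)) \<and>
        (\<forall>l<m. \<exists>j\<in>{1..n}. \<forall>t\<in>{ts l..ts (Suc l)}.
             f (x + t *\<^sub>R (y - x)) = fs j (x + t *\<^sub>R (y - x))))"

definition qmodel ::
  "('a::real_inner \<Rightarrow> real) \<Rightarrow> (nat \<Rightarrow> 'a \<Rightarrow> real) \<Rightarrow> nat \<Rightarrow> real \<Rightarrow> 'a \<Rightarrow> 'a \<Rightarrow> real" where
  "qmodel f fs n \<gamma> y x =
     f y + Min ((\<lambda>j. grad (fs j) y \<bullet> (x - y)) ` {1..n}) - \<gamma> / 2 * (norm (x - y))\<^sup>2"

definition qbar ::
  "('a::real_inner \<Rightarrow> real) \<Rightarrow> (nat \<Rightarrow> 'a \<Rightarrow> real) \<Rightarrow> nat \<Rightarrow> real \<Rightarrow> (nat \<Rightarrow> 'a) \<Rightarrow> nat \<Rightarrow> 'a \<Rightarrow> real" where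
  "qbar f fs n \<gamma> xs s x = Max ((\<lambda>k. qmodel f fs n \<gamma> (xs k) x) ` {0..s})"

end

theory Submission imports Defs begin


lemma grad_exists:
  fixes g :: "'a::euclidean_space \<Rightarrow> real"
  assumes "g differentiable (at y)"
  shows "GDERIV g y :> grad g y"
proof -
  obtain D where D: "(g has_derivative D) (at y)" using assms differentiable_def by blast
  have lin: "linear D" using D has_derivative_linear by blast
  have "\<And>h. D h = h \<bullet> (\<Sum>i\<in>Basis. D i *\<^sub>R i)"
  proof -
    fix h
    have "D h \<bullet> 1 = (\<Sum>i\<in>Basis. (h\<bullet>i) * (D i \<bullet> 1))" by (rule Linear_Algebra.linear_componentwise[OF lin])
    thus "D h = h \<bullet> (\<Sum>i\<in>Basis. D i *\<^sub>R i)"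
      by (simp add: inner_sum_right mult.commute)
  qed
  hence "GDERIV g y :> (\<Sum>i\<in>Basis. D i *\<^sub>R i)"
    unfolding gderiv_def using D by (metis (no_types, lifting) ext)
  thus ?thesis unfolding grad_def by (rule someI)
qed

lemma line_deriv:
  fixes g :: "'a::euclidean_space \<Rightarrow> real"
  assumes "g differentiable (at (y + a *\<^sub>R p))"
  shows "((\<lambda>t. g (y + t *\<^sub>R p)) has_real_derivative (grad g (y + a *\<^sub>R p) \<bullet> p)) (at a)"
proof -
  have G: "(g has_derivative (\<lambda>h. h \<bullet> grad g (y + a *\<^sub>R p))) (at (y + a *\<^sub>R p))"
    using grad_exists[OF assms] unfolding gderiv_def .
  have L: "((\<lambda>t. y + t *\<^sub>R p) has_derivative (\<lambda>t. t *\<^sub>R p)) (at a)"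
    by (auto intro!: derivative_eq_intros)
  have "((\<lambda>t. g (y + t *\<^sub>R p)) has_derivative (\<lambda>t. (t *\<^sub>R p) \<bullet> grad g (y + a *\<^sub>R p))) (at a)"
    using has_derivative_compose[OF L G] by (simp add: o_def)
  thus ?thesis unfolding has_field_derivative_def
    by (rule has_derivative_eq_rhs) (auto simp: fun_eq_iff inner_commute)
qed



lemma analytic_deriv_differentiable:
  assumes "real_analytic h"
  shows "\<exists>D. (deriv h has_real_derivative D) (at t0)"
proof -
  obtain r c where r: "r > 0" and sc: "\<And>t. \<bar>t - t0\<bar> < r \<Longrightarrow> (\<lambda>k. c k * (t - t0) ^ k) sums h t"
    using assms unfolding real_analytic_def by blast
  define P where "P u = (\<Sum>k. c k * u ^ k)" for u :: real
  define P1 where "P1 u = (\<Sum>k. diffs c k * u ^ k)" for u :: real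
  have summ: "summable (\<lambda>k. c k * u ^ k)" if "norm u < r" for u :: real
    using sc[of "t0 + u"] that by (auto dest: sums_summable)
  have hP: "h t = P (t - t0)" if "\<bar>t - t0\<bar> < r" for t
    using sc[OF that] unfolding P_def by (simp add: sums_iff)
  have dP: "(P has_real_derivative P1 u) (at u)" if "norm u < r" for u :: real
    unfolding P_def P_def P1_def by (rule termdiffs_strong'[OF summ that]) 
  have summ1: "summable (\<lambda>k. diffs c k * u ^ k)" if "norm u < r" for u :: real
    by (rule termdiff_converges[OF that summ])
  have dP1: "(P1 has_real_derivative (\<Sum>k. diffs (diffs c) k * 0 ^ k)) (at 0)"
    unfolding P1_def by (rule termdiffs_strong'[OF summ1]) (use r in auto)
  have dh: "deriv h t = P1 (t - t0)" if "\<bar>t - t0\<bar> < r" for t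
  proof -
    have dg: "((\<lambda>t. t - t0) has_real_derivative 1) (at t)" by (auto intro!: derivative_eq_intros)
    have d1: "(P has_real_derivative P1 (t - t0)) (at (t - t0))" using dP that by simp
    have "((\<lambda>t. P (t - t0)) has_real_derivative P1 (t - t0)) (at t)"
      using DERIV_chain2[where f=P and g="\<lambda>t. t - t0" and x=t, OF d1 dg] by simp
    hence "(h has_real_derivative P1 (t - t0)) (at t)"
      by (rule has_field_derivative_transform_within_open[where S="ball t0 r"])
         (use that hP in \<open>auto simp: dist_real_def abs_minus_commute\<close>)
    thus ?thesis by (rule DERIV_imp_deriv)
  qed
  have dg: "((\<lambda>t. t - t0) has_real_derivative 1) (at t0)" by (auto intro!: derivative_eq_intros)
  have "((\<lambda>t. P1 (t - t0)) has_real_derivative (\<Sum>k. diffs (diffs c) k * 0 ^ k)) (at t0)"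
    using DERIV_chain2[where f=P1 and g="\<lambda>t. t - t0" and x=t0, simplified, OF dP1 dg] by simp
  hence "(deriv h has_real_derivative (\<Sum>k. diffs (diffs c) k * 0 ^ k)) (at t0)"
    by (rule has_field_derivative_transform_within_open[where S="ball t0 r"])
       (use r dh in \<open>auto simp: dist_real_def abs_minus_commute\<close>)
  thus ?thesis by blast
qed



lemma mono_helper:
  fixes ch dchi :: "real \<Rightarrow> real"
  assumes "a \<le> b" "\<And>x. a \<le> x \<Longrightarrow> x \<le> b \<Longrightarrow> (ch has_real_derivative dchi x) (at x)"
    "\<And>x. a \<le> x \<Longrightarrow> x \<le> b \<Longrightarrow> dchi x \<ge> 0"
  shows "ch a \<le> ch b"
proof (rule DERIV_nonneg_imp_increasing_open[OF assms(1)])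
  show "\<And>x. a < x \<Longrightarrow> x < b \<Longrightarrow> \<exists>y. (ch has_real_derivative y) (at x) \<and> 0 \<le> y"
    using assms by fastforce
  show "continuous_on {a..b} ch"
    using assms(2) by (intro continuous_at_imp_continuous_on) (meson DERIV_isCont atLeastAtMost_iff)
qed

lemma lip_deriv:
  fixes \<psi> :: "real \<Rightarrow> real"
  assumes d2: "\<And>a. (deriv \<psi> has_real_derivative deriv (deriv \<psi>) a) (at a)"
    and bd: "\<And>a. \<bar>deriv (deriv \<psi>) a\<bar> \<le> \<gamma>"
  shows "\<bar>deriv \<psi> a - deriv \<psi> b\<bar> \<le> \<gamma> * \<bar>a - b\<bar>"
proof -
  have key: "\<bar>deriv \<psi> v - deriv \<psi> u\<bar> \<le> \<gamma> * (v - u)" if "u < v" for u v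
  proof -
    have "\<exists>z. u < z \<and> z < v \<and> deriv \<psi> v - deriv \<psi> u = (v - u) * deriv (deriv \<psi>) z"
      by (rule MVT2[OF that]) (rule d2)
    then obtain z where "deriv \<psi> v - deriv \<psi> u = (v - u) * deriv (deriv \<psi>) z" by blast
    hence "\<bar>deriv \<psi> v - deriv \<psi> u\<bar> = (v - u) * \<bar>deriv (deriv \<psi>) z\<bar>"
      using that by (simp add: abs_mult)
    also have "\<dots> \<le> (v - u) * \<gamma>" using bd[of z] that by (intro mult_left_mono) auto
    finally show ?thesis by (simp add: mult.commute)
  qed
  consider "a < b" | "a = b" | "b < a" by linarith
  thus ?thesis
  proof cases
    case 1 thus ?thesis using key[OF 1] by (simp add: abs_minus_commute)
  next
    case 2 thus ?thesis by simp
  next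
    case 3 thus ?thesis using key[OF 3] by simp
  qed
qed

lemma taylor_upper:
  fixes \<psi> :: "real \<Rightarrow> real"
  assumes d1: "\<And>a. (\<psi> has_real_derivative deriv \<psi> a) (at a)"
    and lip: "\<And>a b. \<bar>deriv \<psi> a - deriv \<psi> b\<bar> \<le> \<gamma> * \<bar>a - b\<bar>"
    and L: "L \<ge> 0"
  shows "\<psi> L \<le> \<psi> 0 + L * deriv \<psi> 0 + \<gamma> / 2 * L\<^sup>2"
proof -
  define ch where "ch s = \<psi> 0 + s * deriv \<psi> 0 + \<gamma> / 2 * s\<^sup>2 - \<psi> s" for s
  have "ch 0 \<le> ch L"
  proof (rule mono_helper[where ch=ch and a=0 and b=L, OF L])
    fix x assume x: "0 \<le> x" "x \<le> L"
    show "(ch has_real_derivative (deriv \<psi> 0 + \<gamma> * x - deriv \<psi> x)) (at x)"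
      unfolding ch_def by (auto intro!: derivative_eq_intros d1 simp: power2_eq_square)
    show "0 \<le> deriv \<psi> 0 + \<gamma> * x - deriv \<psi> x"
      using lip[of x 0] x by (auto simp: abs_le_iff)
  qed
  thus ?thesis unfolding ch_def by simp
qed

lemma line_facts:
  fixes g :: "'a::euclidean_space \<Rightarrow> real" and y p :: 'a
  assumes diff: "\<forall>x. g differentiable (at x)"
    and an: "\<forall>x p. real_analytic (\<lambda>\<alpha>. g (x + \<alpha> *\<^sub>R p))"
    and gb: "\<forall>x p \<alpha>. norm p = 1 \<longrightarrow> \<bar>(deriv ^^ 2) (\<lambda>a. g (x + a *\<^sub>R p)) \<alpha>\<bar> \<le> \<gamma>"
    and p: "norm p = 1"
  defines "\<psi> \<equiv> (\<lambda>a. g (y + a *\<^sub>R p))"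
  shows "\<And>a. (\<psi> has_real_derivative deriv \<psi> a) (at a)"
    and "\<And>a b. \<bar>deriv \<psi> a - deriv \<psi> b\<bar> \<le> \<gamma> * \<bar>a - b\<bar>"
    and "deriv \<psi> 0 = grad g y \<bullet> p"
proof -
  have ld: "(\<psi> has_real_derivative (grad g (y + a *\<^sub>R p) \<bullet> p)) (at a)" for a
    unfolding \<psi>_def by (rule line_deriv) (use diff in auto)
  hence dd: "deriv \<psi> a = grad g (y + a *\<^sub>R p) \<bullet> p" for a by (rule DERIV_imp_deriv)
  show d1: "\<And>a. (\<psi> has_real_derivative deriv \<psi> a) (at a)" using ld dd by simp
  show "deriv \<psi> 0 = grad g y \<bullet> p" using dd[of 0] by simp
  have d2: "(deriv \<psi> has_real_derivative deriv (deriv \<psi>) a) (at a)" for a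
  proof -
    obtain D where "(deriv \<psi> has_real_derivative D) (at a)"
      using analytic_deriv_differentiable[of \<psi> a] an unfolding \<psi>_def by blast
    thus ?thesis using DERIV_imp_deriv by metis
  qed
  have bd: "\<bar>deriv (deriv \<psi>) a\<bar> \<le> \<gamma>" for a
    using gb p unfolding \<psi>_def by (simp add: numeral_2_eq_2)
  show "\<And>a b. \<bar>deriv \<psi> a - deriv \<psi> b\<bar> \<le> \<gamma> * \<bar>a - b\<bar>"
    by (rule lip_deriv[OF d2 bd])
qed




lemma grad_upper:
  fixes g :: "'a::euclidean_space \<Rightarrow> real" and y v :: 'a
  assumes diff: "\<forall>x. g differentiable (at x)"
    and an: "\<forall>x p. real_analytic (\<lambda>\<alpha>. g (x + \<alpha> *\<^sub>R p))"
    and gb: "\<forall>x p \<alpha>. norm p = 1 \<longrightarrow> \<bar>(deriv ^^ 2) (\<lambda>a. g (x + a *\<^sub>R p)) \<alpha>\<bar> \<le> \<gamma>"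
  shows "g (y + v) \<le> g y + grad g y \<bullet> v + \<gamma> / 2 * (norm v)\<^sup>2"
proof (cases "v = 0")
  case True thus ?thesis by simp
next
  case False
  define L where "L = norm v"
  define p where "p = (1 / L) *\<^sub>R v"
  have L: "L > 0" using False L_def by simp
  have p: "norm p = 1" using L unfolding p_def L_def by simp
  have vp: "v = L *\<^sub>R p" using L unfolding p_def by simp
  note lf = line_facts[OF diff an gb p, of y]
  have "g (y + L *\<^sub>R p) \<le> g (y + 0 *\<^sub>R p) + L * deriv (\<lambda>a. g (y + a *\<^sub>R p)) 0 + \<gamma> / 2 * L\<^sup>2"
    using taylor_upper[of "\<lambda>a. g (y + a *\<^sub>R p)", OF lf(1) lf(2)] L by simp
  moreover have "L * deriv (\<lambda>a. g (y + a *\<^sub>R p)) 0 = grad g y \<bullet> v"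
    unfolding lf(3) by (simp add: vp inner_scaleR_right)
  ultimately show ?thesis unfolding L_def[symmetric] by (simp add: vp[symmetric])
qed

lemma qmodel_le:
  fixes f :: "'a::euclidean_space \<Rightarrow> real" and fs :: "nat \<Rightarrow> 'a \<Rightarrow> real"
  assumes n_pos: "n \<ge> 1"
    and diff: "\<forall>j\<in>{1..n}. \<forall>x. fs j differentiable (at x)"
    and analytic: "\<forall>j\<in>{1..n}. \<forall>x p. real_analytic (\<lambda>\<alpha>. fs j (x + \<alpha> *\<^sub>R p))"
    and piecewise: "piecewise_on_segments f fs n"
    and gamma_bound: "\<forall>j\<in>{1..n}. \<forall>x p \<alpha>. norm p = 1 \<longrightarrow>
        \<bar>(deriv ^^ 2) (\<lambda>a. fs j (x + a *\<^sub>R p)) \<alpha>\<bar> \<le> \<gamma>"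
  shows "qmodel f fs n \<gamma> y x \<le> f x"
proof (cases "x = y")
  case True
  have "(\<lambda>j. grad (fs j) y \<bullet> (x - y)) ` {1..n} = {0}" using True n_pos by auto
  thus ?thesis using True unfolding qmodel_def by simp
next
  case False
  define v where "v = x - y"
  define L where "L = norm v"
  define p where "p = (1 / L) *\<^sub>R v"
  have L: "L > 0" using False L_def v_def by simp
  have p: "norm p = 1" using L unfolding p_def L_def by simp
  have vp: "\<And>t. (t * L) *\<^sub>R p = t *\<^sub>R v" using L unfolding p_def by simp
  define S where "S = (\<lambda>j. grad (fs j) y \<bullet> (x - y)) ` {1..n}"
  define m where "m = Min S"
  have finS: "finite S" "S \<noteq> {}" using n_pos unfolding S_def by auto
  define \<psi> where "\<psi> j = (\<lambda>a. fs j (y + a *\<^sub>R p))" for j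
  have lf: "\<And>a. (\<psi> j has_real_derivative deriv (\<psi> j) a) (at a)"
     "\<And>a b. \<bar>deriv (\<psi> j) a - deriv (\<psi> j) b\<bar> \<le> \<gamma> * \<bar>a - b\<bar>"
     "deriv (\<psi> j) 0 = grad (fs j) y \<bullet> p" if "j \<in> {1..n}" for j
    using line_facts[of "fs j" \<gamma> p y] diff analytic gamma_bound p that unfolding \<psi>_def by auto
  have mle: "m \<le> L * deriv (\<psi> j) 0" if "j \<in> {1..n}" for j
  proof -
    have "m \<le> grad (fs j) y \<bullet> (x - y)" unfolding m_def S_def using finS that
      by (intro Min_le) (auto simp: S_def)
    also have "\<dots> = L * deriv (\<psi> j) 0" using lf(3)[OF that] unfolding p_def v_def
      using L by (simp add: inner_scaleR_right)
    finally show ?thesis .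
  qed
  obtain M ts where ts0: "ts 0 = 0" and tsM: "ts M = 1" and inc: "\<forall>l<M. ts l < ts (Suc l)"
    and pc: "\<forall>l<M. \<exists>j\<in>{1..n}. \<forall>t\<in>{ts l..ts (Suc l)}.
             f (y + t *\<^sub>R (x - y)) = fs j (y + t *\<^sub>R (x - y))"
    using piecewise unfolding piecewise_on_segments_def by blast
  define \<Psi> where "\<Psi> t = f (y + t *\<^sub>R v) - f y - m * t + \<gamma> / 2 * L\<^sup>2 * t\<^sup>2" for t
  have ind: "l \<le> M \<Longrightarrow> 0 \<le> ts l \<and> \<Psi> 0 \<le> \<Psi> (ts l)" for l
  proof (induction l)
    case 0 thus ?case using ts0 by simp
  next
    case (Suc l)
    hence lM: "l < M" and IH: "0 \<le> ts l" "\<Psi> 0 \<le> \<Psi> (ts l)" by auto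
    obtain j where j: "j \<in> {1..n}" and fj: "\<forall>t\<in>{ts l..ts (Suc l)}.
             f (y + t *\<^sub>R (x - y)) = fs j (y + t *\<^sub>R (x - y))" using pc lM by blast
    define ch where "ch t = \<psi> j (t * L) - f y - m * t + \<gamma> / 2 * L\<^sup>2 * t\<^sup>2" for t
    have eq: "\<Psi> t = ch t" if "t \<in> {ts l..ts (Suc l)}" for t
      using fj that unfolding \<Psi>_def ch_def \<psi>_def vp v_def by simp
    have "ch (ts l) \<le> ch (ts (Suc l))"
    proof (rule mono_helper[where ch=ch and a="ts l" and b="ts (Suc l)"])
      show "ts l \<le> ts (Suc l)" using inc lM by force
      fix t assume t: "ts l \<le> t" "t \<le> ts (Suc l)"
      have dc: "((\<lambda>t. \<psi> j (t * L)) has_real_derivative deriv (\<psi> j) (t * L) * L) (at t)"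
      proof -
        have dg: "((\<lambda>t. t * L) has_real_derivative L) (at t)" by (auto intro!: derivative_eq_intros)
        show ?thesis using DERIV_chain2[where f="\<psi> j" and g="\<lambda>t. t * L" and x=t, OF lf(1)[OF j] dg] by simp
      qed
      show "(ch has_real_derivative (deriv (\<psi> j) (t * L) * L - m + \<gamma> * L\<^sup>2 * t)) (at t)"
        unfolding ch_def by (auto intro!: derivative_eq_intros dc simp: power2_eq_square)
      have t0: "t \<ge> 0" using t IH by linarith
      have "deriv (\<psi> j) (t * L) \<ge> deriv (\<psi> j) 0 - \<gamma> * (t * L)"
        using lf(2)[OF j, of "t * L" 0] t0 L by (auto simp: abs_le_iff)
      hence "L * deriv (\<psi> j) (t * L) \<ge> L * (deriv (\<psi> j) 0 - \<gamma> * (t * L))"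
        using L by (intro mult_left_mono) auto
      thus "0 \<le> deriv (\<psi> j) (t * L) * L - m + \<gamma> * L\<^sup>2 * t"
        using mle[OF j] by (simp add: algebra_simps power2_eq_square)
    qed
    moreover have "ts l \<le> ts (Suc l)" using inc lM by force
    ultimately have "\<Psi> (ts l) \<le> \<Psi> (ts (Suc l))" using eq by auto
    thus ?case using IH \<open>ts l \<le> ts (Suc l)\<close> by linarith
  qed
  have "\<Psi> 0 \<le> \<Psi> 1" using ind[of M] tsM by simp
  thus ?thesis unfolding \<Psi>_def qmodel_def m_def S_def L_def v_def by simp
qed




theorem theorem5p1:
  fixes f :: "'a::euclidean_space \<Rightarrow> real"
    and fs :: "nat \<Rightarrow> 'a \<Rightarrow> real"
    and n :: nat and \<gamma> :: real
    and lo hi :: 'a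
    and xs :: "nat \<Rightarrow> 'a"
  assumes n_pos: "n \<ge> 1"
    and box: "\<forall>i\<in>Basis. lo \<bullet> i \<le> hi \<bullet> i"
    and diff: "\<forall>j\<in>{1..n}. \<forall>x. fs j differentiable (at x)"
    and analytic: "\<forall>j\<in>{1..n}. \<forall>x p. real_analytic (\<lambda>\<alpha>. fs j (x + \<alpha> *\<^sub>R p))"
    and f_cont: "continuous_on UNIV f"
    and piecewise: "piecewise_on_segments f fs n"
    and gamma_pos: "\<gamma> > 0"
    and gamma_bound: "\<forall>j\<in>{1..n}. \<forall>x p \<alpha>. norm p = 1 \<longrightarrow>
        \<bar>(deriv ^^ 2) (\<lambda>a. fs j (x + a *\<^sub>R p)) \<alpha>\<bar> \<le> \<gamma>"
    and x0: "xs 0 \<in> cbox lo hi"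
    and step: "\<forall>s. xs (Suc s) \<in> cbox lo hi \<and>
        (\<forall>z\<in>cbox lo hi. qbar f fs n \<gamma> xs s (xs (Suc s)) \<le> qbar f fs n \<gamma> xs s z)"
  shows "\<forall>xstar. (\<exists>r. strict_mono r \<and> (xs \<circ> r) \<longlonglongrightarrow> xstar) \<longrightarrow>
           xstar \<in> cbox lo hi \<and> (\<forall>z\<in>cbox lo hi. f xstar \<le> f z)"
proof (intro allI impI)
  fix xstar assume "\<exists>r. strict_mono r \<and> (xs \<circ> r) \<longlonglongrightarrow> xstar"
  then obtain r where r: "strict_mono r" and lim: "(xs \<circ> r) \<longlonglongrightarrow> xstar" by blast
  have inbox: "xs s \<in> cbox lo hi" for s using x0 step by (cases s) auto
  show "xstar \<in> cbox lo hi \<and> (\<forall>z\<in>cbox lo hi. f xstar \<le> f z)"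
  proof
    show "xstar \<in> cbox lo hi"
      using closed_sequentially[OF closed_cbox, of "xs \<circ> r"] inbox lim by auto
  next
    show "\<forall>z\<in>cbox lo hi. f xstar \<le> f z"
    proof
      fix z assume z: "z \<in> cbox lo hi"
      define a where "a i = xs (r i)" for i
      define b where "b i = xs (r (Suc i))" for i
      have la: "a \<longlonglongrightarrow> xstar" using lim unfolding a_def o_def .
      have lb: "b \<longlonglongrightarrow> xstar" using LIMSEQ_Suc[OF la] unfolding a_def b_def .
      define h where "h i = f (a i) - (\<Sum>j\<in>{1..n}. \<bar>fs j (b i) - fs j (a i)\<bar>) - \<gamma> * (norm (b i - a i))\<^sup>2" for i
      have qle: "qmodel f fs n \<gamma> y w \<le> f w" for y w
        by (rule qmodel_le[OF n_pos diff analytic piecewise gamma_bound])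
      have hz: "h i \<le> f z" for i
      proof -
        define s where "s = r (Suc i) - 1"
        have rl: "r i < r (Suc i)" using r by (simp add: strict_mono_def)
        hence s1: "Suc s = r (Suc i)" and s2: "r i \<le> s" unfolding s_def by auto
        have "qmodel f fs n \<gamma> (a i) (b i) \<le> qbar f fs n \<gamma> xs s (xs (Suc s))"
          unfolding qbar_def a_def b_def s1[symmetric] using s2 by (intro Max_ge) auto
        also have "\<dots> \<le> qbar f fs n \<gamma> xs s z" using step z by blast
        also have "\<dots> \<le> f z" unfolding qbar_def using qle by (subst Max_le_iff) auto
        finally have q: "qmodel f fs n \<gamma> (a i) (b i) \<le> f z" .
        define S where "S = (\<lambda>j. grad (fs j) (a i) \<bullet> (b i - a i)) ` {1..n}"
        have finS: "finite S" "S \<noteq> {}" using n_pos unfolding S_def by auto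
        have "Min S \<ge> - (\<Sum>j\<in>{1..n}. \<bar>fs j (b i) - fs j (a i)\<bar>) - \<gamma> / 2 * (norm (b i - a i))\<^sup>2"
        proof (subst Min_ge_iff[OF finS], intro ballI)
          fix u assume "u \<in> S"
          then obtain j where j: "j \<in> {1..n}" and u: "u = grad (fs j) (a i) \<bullet> (b i - a i)"
            unfolding S_def by auto
          have "fs j (a i + (b i - a i)) \<le> fs j (a i) + grad (fs j) (a i) \<bullet> (b i - a i) + \<gamma> / 2 * (norm (b i - a i))\<^sup>2"
            by (rule grad_upper) (use diff analytic gamma_bound j in auto)
          moreover have "\<bar>fs j (b i) - fs j (a i)\<bar> \<le> (\<Sum>j\<in>{1..n}. \<bar>fs j (b i) - fs j (a i)\<bar>)"
            by (rule member_le_sum[OF j]) auto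
          ultimately show "- (\<Sum>j\<in>{1..n}. \<bar>fs j (b i) - fs j (a i)\<bar>) - \<gamma> / 2 * (norm (b i - a i))\<^sup>2 \<le> u"
            unfolding u by simp
        qed
        hence "h i \<le> qmodel f fs n \<gamma> (a i) (b i)"
          unfolding h_def qmodel_def S_def using gamma_pos by (simp add: power2_eq_square)
        thus ?thesis using q by linarith
      qed
      have cf: "isCont f x" for x using f_cont by (simp add: continuous_on_eq_continuous_at)
      have cfs: "isCont (fs j) x" if "j \<in> {1..n}" for j x
        using diff that differentiable_imp_continuous_within by blast
      have "h \<longlonglongrightarrow> f xstar - (\<Sum>j\<in>{1..n}. \<bar>fs j xstar - fs j xstar\<bar>) - \<gamma> * (norm (xstar - xstar))\<^sup>2"
        unfolding h_def
        by (intro tendsto_intros isCont_tendsto_compose[OF cf la] isCont_tendsto_compose[OF cfs la]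
            isCont_tendsto_compose[OF cfs lb] la lb) auto
      hence "h \<longlonglongrightarrow> f xstar" by simp
      thus "f xstar \<le> f z" by (rule LIMSEQ_le_const2) (use hz in auto)
    qed
  qed
qed


end
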